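(* Let $p\ge 2$ and $\varphi\in\mathbb{C}^{p-1}\setminus\Omega$. Then $\dim Z^2_{1}(F_\varphi,F_\varphi)=2(p-1)$; a basis is given by the cochains $\psi^1_{2,j}$ ($3\le j\le 2p$) defined by $\psi^1_{2,j}(X_2,X_j)=X_1$ and zero on all other basis pairs (up to antisymmetry).
   Context: Let $p\ge 2$ and $\varphi=(\varphi_1,\dots,\varphi_{p-1})\in\mathbb{C}^{p-1}$. $F_\varphi$ denotes the $2p$-dimensional complex Lie algebra with basis $X_1,\dots,X_{2p}$ whose nonzero brackets (up to antisymmetry) are $[X_1,X_2]=X_1$, $[X_2,X_{2k+1}]=\varphi_kX_{2k+1}$, $[X_2,X_{2k+2}]=-(1+\varphi_k)X_{2k+2}$, $[X_{2k+1},X_{2k+2}]=X_1$ for $1\le k\le p-1$. It is graded by $(F_\varphi)_0=\mathbb{C}X_2$, $(F_\varphi)_1=\operatorname{span}\{X_3,\dots,X_{2p}\}$, $(F_\varphi)_2=\mathbb{C}X_1$. A $2$-cochain $\psi$ is homogeneous of degree $k$ if $\psi((F_\varphi)_i,(F_\varphi)_j)\subset(F_\varphi)_{i+j+k}$; $Z^2_k(F_\varphi,F_\varphi)$ denotes the space of homogeneous degree-$k$ $2$-cocycles of the Chevalley–Eilenberg complex with adjoint coefficients. $\Omega=\Omega_1\cup\Omega_2\subset\mathbb{C}^{p-1}$, where $\Omega_1$ is the union of the hyperplanes $\{1+\varphi_i+\varphi_j=0\}$, $\{2+\varphi_i+\varphi_j=0\}$ ($1\le i,j\le p-1$), $\{\varphi_i-\varphi_j=0\}$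 ($i\ne j$), $\{\varphi_i=0\}$, $\{\varphi_i+1=0\}$, $\{2\varphi_i+1=0\}$, and $\Omega_2$ is the union of $\{1+\varphi_i-\varphi_j=0\}$, $\{\varphi_i+\varphi_j=0\}$, $\{2+\varphi_i=0\}$, $\{1-\varphi_i=0\}$, $\{1+2\varphi_i-\varphi_j=0\}$, $\{1+2\varphi_i+\varphi_j=0\}$, $\{2\varphi_i-\varphi_j=0\}$, $\{2+2\varphi_i+\varphi_j=0\}$ ($1\le i,j\le p-1$). *)

theory Defs
  imports "HOL-Analysis.Analysis" "HOL-Library.Function_Algebras"
begin

text \<open>Elements of F_phi are coordinate vectors v :: nat => complex, with v k the
coefficient of X_k (only indices 1..2p are meaningful).  phi :: nat => complex
encodes (phi_1,...,phi_{p-1}); only indices 1..p-1 are used.\<close>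

type_synonym vec = "nat \<Rightarrow> complex"

text \<open>A 2-cochain psi is given by its values on basis pairs:
  psi i j k = coefficient of X_k in psi(X_i, X_j).\<close>
type_synonym cochain2 = "nat \<Rightarrow> nat \<Rightarrow> nat \<Rightarrow> complex"

text \<open>Structure constants: sc p phi i j k = coefficient of X_k in [X_i, X_j].\<close>
definition sc :: "nat \<Rightarrow> (nat \<Rightarrow> complex) \<Rightarrow> nat \<Rightarrow> nat \<Rightarrow> nat \<Rightarrow> complex" where
  "sc p phi i j k =
    (if i = 1 \<and> j = 2 \<and> k = 1 then 1
     else if i = 2 \<and> j = 1 \<and> k = 1 then -1
     else if i = 2 \<and> 3 \<le> j \<and> j \<le> 2*p \<and> k = j \<and> odd j then phi ((j - 1) div 2)
     else if j = 2 \<and> 3 \<le> i \<and> i \<le> 2*p \<and> k = i \<and> odd i then - phi ((i - 1) div 2)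
     else if i = 2 \<and> 4 \<le> j \<and> j \<le> 2*p \<and> k = j \<and> even j then - (1 + phi ((j - 2) div 2))
     else if j = 2 \<and> 4 \<le> i \<and> i \<le> 2*p \<and> k = i \<and> even i then (1 + phi ((i - 2) div 2))
     else if 3 \<le> i \<and> odd i \<and> j = i + 1 \<and> j \<le> 2*p \<and> k = 1 then 1
     else if 3 \<le> j \<and> odd j \<and> i = j + 1 \<and> i \<le> 2*p \<and> k = 1 then -1
     else 0)"

definition gdeg :: "nat \<Rightarrow> int" where
  "gdeg i = (if i = 2 then 0 else if i = 1 then 2 else 1)"

definition is_cochain2 :: "nat \<Rightarrow> cochain2 \<Rightarrow> bool" where
  "is_cochain2 p psi \<longleftrightarrow>
     (\<forall>i j k. (i \<notin> {1..2*p} \<or> j \<notin> {1..2*p} \<or> k \<notin> {1..2*p}) \<longrightarrow> psi i j k = 0) \<and>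
     (\<forall>i j k. psi i j k = - psi j i k)"

definition homogeneous :: "nat \<Rightarrow> int \<Rightarrow> cochain2 \<Rightarrow> bool" where
  "homogeneous p d psi \<longleftrightarrow>
     (\<forall>i\<in>{1..2*p}. \<forall>j\<in>{1..2*p}. \<forall>k\<in>{1..2*p}.
        psi i j k \<noteq> 0 \<longrightarrow> gdeg k = gdeg i + gdeg j + d)"

definition ad_vec :: "nat \<Rightarrow> (nat \<Rightarrow> complex) \<Rightarrow> nat \<Rightarrow> vec \<Rightarrow> vec" where
  "ad_vec p phi i v = (\<lambda>m. \<Sum>a\<in>{1..2*p}. v a * sc p phi i a m)"

definition psi_br :: "nat \<Rightarrow> (nat \<Rightarrow> complex) \<Rightarrow> cochain2 \<Rightarrow> nat \<Rightarrow> nat \<Rightarrow> nat \<Rightarrow> vec" where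
  "psi_br p phi psi i j l = (\<lambda>m. \<Sum>a\<in>{1..2*p}. sc p phi i j a * psi a l m)"

text \<open>Chevalley-Eilenberg differential (adjoint coefficients) on basis triples:
  d psi (x,y,z) = [x,psi(y,z)] - [y,psi(x,z)] + [z,psi(x,y)]
                 - psi([x,y],z) + psi([x,z],y) - psi([y,z],x).\<close>
definition d2 :: "nat \<Rightarrow> (nat \<Rightarrow> complex) \<Rightarrow> cochain2 \<Rightarrow> nat \<Rightarrow> nat \<Rightarrow> nat \<Rightarrow> vec" where
  "d2 p phi psi i j l = (\<lambda>m.
       ad_vec p phi i (psi j l) m - ad_vec p phi j (psi i l) m + ad_vec p phi l (psi i j) m
     - psi_br p phi psi i j l m + psi_br p phi psi i l j m - psi_br p phi psi j l i m)"

definition is_cocycle2 :: "nat \<Rightarrow> (nat \<Rightarrow> complex) \<Rightarrow> cochain2 \<Rightarrow> bool" where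
  "is_cocycle2 p phi psi \<longleftrightarrow>
     (\<forall>i\<in>{1..2*p}. \<forall>j\<in>{1..2*p}. \<forall>l\<in>{1..2*p}. \<forall>m\<in>{1..2*p}. d2 p phi psi i j l m = 0)"

definition Z2 :: "nat \<Rightarrow> (nat \<Rightarrow> complex) \<Rightarrow> int \<Rightarrow> cochain2 set" where
  "Z2 p phi d = {psi. is_cochain2 p psi \<and> homogeneous p d psi \<and> is_cocycle2 p phi psi}"

definition cscale :: "complex \<Rightarrow> cochain2 \<Rightarrow> cochain2" where
  "cscale c psi = (\<lambda>i j k. c * psi i j k)"

lemma vector_space_cscale: "vector_space cscale"
  by unfold_locales (auto simp: cscale_def fun_eq_iff algebra_simps)

definition psi12 :: "nat \<Rightarrow> cochain2" where
  "psi12 j = (\<lambda>a b m. if a = 2 \<and> b = j \<and> m = 1 then 1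
                      else if a = j \<and> b = 2 \<and> m = 1 then -1 else 0)"

definition in_Omega1 :: "nat \<Rightarrow> (nat \<Rightarrow> complex) \<Rightarrow> bool" where
  "in_Omega1 p phi \<longleftrightarrow>
     (\<exists>i\<in>{1..p-1}. \<exists>j\<in>{1..p-1}. 1 + phi i + phi j = 0 \<or> 2 + phi i + phi j = 0
                                 \<or> (i \<noteq> j \<and> phi i - phi j = 0)) \<or>
     (\<exists>i\<in>{1..p-1}. phi i = 0 \<or> phi i + 1 = 0 \<or> 2 * phi i + 1 = 0)"

definition in_Omega2 :: "nat \<Rightarrow> (nat \<Rightarrow> complex) \<Rightarrow> bool" where
  "in_Omega2 p phi \<longleftrightarrow>
     (\<exists>i\<in>{1..p-1}. \<exists>j\<in>{1..p-1}. 1 + phi i - phi j = 0 \<or> phi i + phi j = 0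
        \<or> 1 + 2 * phi i - phi j = 0 \<or> 1 + 2 * phi i + phi j = 0
        \<or> 2 * phi i - phi j = 0 \<or> 2 + 2 * phi i + phi j = 0) \<or>
     (\<exists>i\<in>{1..p-1}. 2 + phi i = 0 \<or> 1 - phi i = 0)"

definition in_Omega :: "nat \<Rightarrow> (nat \<Rightarrow> complex) \<Rightarrow> bool" where
  "in_Omega p phi \<longleftrightarrow> in_Omega1 p phi \<or> in_Omega2 p phi"

end

theory Submission imports Defs begin

definition Fc :: "nat \<Rightarrow> (nat \<Rightarrow> complex) \<Rightarrow> cochain2" where
  "Fc p c = (\<lambda>a b m. if m = 1 \<and> a = 2 \<and> 3 \<le> b \<and> b \<le> 2*p then c b
      else if m = 1 \<and> b = 2 \<and> 3 \<le> a \<and> a \<le> 2*p then - c a else 0)"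

lemma sc_1: "sc p phi i 1 m = (if i = 2 \<and> m = 1 then -1 else 0)"
  by (simp add: sc_def)

lemma sc_big: "3 \<le> a \<Longrightarrow> sc p phi i j a =
   (if i = 2 \<and> j = a then sc p phi 2 a a else if j = 2 \<and> i = a then sc p phi a 2 a else 0)"
proof -
  assume a: "3 \<le> a"
  show ?thesis
  proof (cases "i = 2 \<and> j = a")
    case True then show ?thesis by simp
  next
    case F1: False
    show ?thesis
    proof (cases "j = 2 \<and> i = a")
      case True then show ?thesis by simp
    next
      case False
      then show ?thesis using F1 a unfolding sc_def by auto
    qed
  qed
qed

lemma sc_anti: "3 \<le> a \<Longrightarrow> sc p phi a 2 a = - sc p phi 2 a a"
  by (cases "odd a"; simp add: sc_def)

lemma sc_2: "sc p phi i j 2 = 0"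
  by (auto simp add: sc_def)

lemma ad_Fc:
  assumes "p \<ge> 1"
  shows "ad_vec p phi i (Fc p c j l) m = (if i = 2 \<and> m = 1 then - Fc p c j l 1 else 0)"
proof -
  have "\<And>a. Fc p c j l a * sc p phi i a m = (if a = 1 then Fc p c j l 1 * sc p phi i 1 m else 0)"
    by (simp add: Fc_def)
  then have "ad_vec p phi i (Fc p c j l) m = (\<Sum>a\<in>{1..2*p}. (if a = 1 then Fc p c j l 1 * sc p phi i 1 m else 0))"
    unfolding ad_vec_def by (rule sum.cong[OF refl])
  then have "ad_vec p phi i (Fc p c j l) m = Fc p c j l 1 * sc p phi i 1 m"
    using assms by (simp only: sum.delta finite_atLeastAtMost) simp
  then show ?thesis unfolding sc_1 by simp
qed

lemma br_Fc:
  shows "psi_br p phi (Fc p c) i j l m = (if m = 1 \<and> l = 2 then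
     - ((if i = 2 \<and> 3 \<le> j \<and> j \<le> 2*p then sc p phi 2 j j * c j else 0)
      - (if j = 2 \<and> 3 \<le> i \<and> i \<le> 2*p then sc p phi 2 i i * c i else 0)) else 0)"
proof -
  have "\<And>a. a \<in> {1..2*p} \<Longrightarrow> sc p phi i j a * Fc p c a l m =
     (if m = 1 \<and> l = 2 then
       - ((if a = j then (if i = 2 \<and> 3 \<le> j then sc p phi 2 j j * c j else 0) else 0)
        - (if a = i then (if j = 2 \<and> 3 \<le> i then sc p phi 2 i i * c i else 0) else 0)) else 0)"
  proof -
    fix a assume a: "a \<in> {1..2*p}"
    consider "a = 1" | "a = 2" | "3 \<le> a" using a by fastforce
    then show "?thesis a"
    proof cases
      case 1 then show ?thesis by (simp add: Fc_def)
    next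
      case 2 then show ?thesis by (simp add: sc_2)
    next
      case 3
      have F: "Fc p c a l m = (if m = 1 \<and> l = 2 then - c a else 0)"
        using 3 a by (simp add: Fc_def)
      show ?thesis unfolding F using 3 sc_big[OF 3, of p phi i j] sc_anti[OF 3, of p phi] by auto
    qed
  qed
  then have e: "psi_br p phi (Fc p c) i j l m = (\<Sum>a\<in>{1..2*p}. (if m = 1 \<and> l = 2 then
       - ((if a = j then (if i = 2 \<and> 3 \<le> j then sc p phi 2 j j * c j else 0) else 0)
        - (if a = i then (if j = 2 \<and> 3 \<le> i then sc p phi 2 i i * c i else 0) else 0)) else 0))"
    unfolding psi_br_def by (rule sum.cong[OF refl])
  show ?thesis
  proof (cases "m = 1 \<and> l = 2")
    case False then show ?thesis unfolding e if_not_P[OF False] by simp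
  next
    case True
    define K1 where "K1 = (if i = 2 \<and> 3 \<le> j then sc p phi 2 j j * c j else 0)"
    define K2 where "K2 = (if j = 2 \<and> 3 \<le> i then sc p phi 2 i i * c i else 0)"
    have "psi_br p phi (Fc p c) i j l m = (\<Sum>a\<in>{1..2*p}. - ((if a = j then K1 else 0) - (if a = i then K2 else 0)))"
      unfolding e K1_def[symmetric] K2_def[symmetric] using True by simp
    also have "\<dots> = - ((\<Sum>a\<in>{1..2*p}. if a = j then K1 else 0) - (\<Sum>a\<in>{1..2*p}. if a = i then K2 else 0))"
      by (simp only: sum_negf sum_subtractf)
    also have "\<dots> = - ((if j \<in> {1..2*p} then K1 else 0) - (if i \<in> {1..2*p} then K2 else 0))"
      by (simp only: sum.delta finite_atLeastAtMost)
    finally show ?thesis using True by (auto simp: K1_def K2_def)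
  qed
qed

lemma cocycle_Fc:
  assumes "p \<ge> 1"
  shows "is_cocycle2 p phi (Fc p c)"
  unfolding is_cocycle2_def
proof (intro ballI)
  fix i j l m assume r: "i \<in> {1..2*p}" "j \<in> {1..2*p}" "l \<in> {1..2*p}" "m \<in> {1..2*p}"
  show "d2 p phi (Fc p c) i j l m = 0"
  proof (cases "m = 1")
    case False then show ?thesis unfolding d2_def ad_Fc[OF assms] br_Fc by simp
  next
    case True
    show ?thesis unfolding d2_def ad_Fc[OF assms] br_Fc True
      using r by (cases "i = 2"; cases "j = 2"; cases "l = 2"; simp add: Fc_def)
  qed
qed

lemma sum_apply3: "(\<Sum>v\<in>S. f v) a b m = (\<Sum>v\<in>S. (f v :: cochain2) a b m)"
proof (cases "finite S")
  case True then show ?thesis by (induction S rule: finite_induct) auto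
qed simp

lemma psi12_split: "3 \<le> j \<Longrightarrow> psi12 j a b m =
  (if b = j then (if a = 2 \<and> m = 1 then 1 else 0) else 0) + (if a = j then (if b = 2 \<and> m = 1 then -1 else 0) else 0)"
  by (auto simp: psi12_def)

lemma inj_psi12: "inj_on psi12 {3..2*p}"
proof (rule inj_onI)
  fix j k assume j: "j \<in> {3..2*p}" and k: "k \<in> {3..2*p}" and e: "psi12 j = psi12 k"
  have "psi12 j 2 j 1 = psi12 k 2 j 1" using e by simp
  then show "j = k" using j k by (auto simp: psi12_def split: if_splits)
qed

lemma sum_psi12: "(\<Sum>j\<in>{3..2*p}. w j * psi12 j a b m) = Fc p w a b m"
proof -
  have "(\<Sum>j\<in>{3..2*p}. w j * psi12 j a b m) = (\<Sum>j\<in>{3..2*p}.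
     (if b = j then w j * (if a = 2 \<and> m = 1 then 1 else 0) else 0) + (if a = j then w j * (if b = 2 \<and> m = 1 then -1 else 0) else 0))"
    by (rule sum.cong[OF refl]) (simp add: psi12_split distrib_left)
  also have "\<dots> = Fc p w a b m"
    by (simp add: sum.distrib sum.delta Fc_def)
  finally show ?thesis .
qed

lemma span_eq: "module.span cscale (psi12 ` {3..2*p}) = range (Fc p)"
proof -
  interpret V: vector_space cscale by (rule vector_space_cscale)
  have fin: "finite (psi12 ` {3..2*p})" by simp
  have e: "\<And>u. (\<Sum>v\<in>psi12 ` {3..2*p}. cscale (u v) v) = Fc p (u \<circ> psi12)"
  proof -
    fix u :: "cochain2 \<Rightarrow> complex"
    have "(\<Sum>v\<in>psi12 ` {3..2*p}. cscale (u v) v) = (\<Sum>j\<in>{3..2*p}. cscale (u (psi12 j)) (psi12 j))"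
      by (simp add: sum.reindex[OF inj_psi12])
    also have "\<dots> = Fc p (u \<circ> psi12)"
      by (simp add: fun_eq_iff sum_apply3 cscale_def sum_psi12 comp_def)
    finally show "?thesis u" .
  qed
  have r: "Fc p c = Fc p ((c \<circ> inv_into {3..2*p} psi12) \<circ> psi12)" for c
    by (auto simp: Fc_def fun_eq_iff inv_into_f_f[OF inj_psi12])
  show ?thesis unfolding V.span_finite[OF fin] e
    using r by auto
qed

lemma Fc_cochain: "is_cochain2 p (Fc p c)"
  unfolding is_cochain2_def by (auto simp: Fc_def)
lemma Fc_hom: "homogeneous p 1 (Fc p c)"
  unfolding homogeneous_def
proof (intro ballI impI)
  fix i j k assume "Fc p c i j k \<noteq> 0"
  then have "(k = 1 \<and> i = 2 \<and> 3 \<le> j) \<or> (k = 1 \<and> j = 2 \<and> 3 \<le> i)"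
    unfolding Fc_def by (auto split: if_splits)
  then show "gdeg k = gdeg i + gdeg j + 1" unfolding gdeg_def by auto
qed
lemma gdeg_lemma:
  assumes "gdeg m = gdeg a + gdeg b + 1" "a \<noteq> b"
  shows "(m = 1 \<and> a = 2 \<and> b \<noteq> 1 \<and> b \<noteq> 2) \<or> (m = 1 \<and> b = 2 \<and> a \<noteq> 1 \<and> a \<noteq> 2)"
  using assms unfolding gdeg_def by (auto split: if_splits)

lemma Fc_in: assumes "p \<ge> 1" shows "Fc p c \<in> Z2 p phi 1"
  unfolding Z2_def using cocycle_Fc[OF assms] Fc_cochain Fc_hom by auto

lemma Z2_sub: assumes "psi \<in> Z2 p phi 1" shows "psi = Fc p (\<lambda>b. psi 2 b 1)"
proof -
  have C: "is_cochain2 p psi" and H: "homogeneous p 1 psi" using assms by (auto simp: Z2_def)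
  have out: "\<And>a b m. (a \<notin> {1..2*p} \<or> b \<notin> {1..2*p} \<or> m \<notin> {1..2*p}) \<Longrightarrow> psi a b m = 0"
    and anti: "\<And>a b m. psi a b m = - psi b a m" using C unfolding is_cochain2_def by blast+
  have diag: "psi a a m = 0" for a m
  proof -
    have e: "psi a a m = - psi a a m" by (rule anti)
    have "psi a a m + psi a a m = 0" by (subst e) (simp only: add.left_inverse)
    then have "2 * psi a a m = 0" by (simp only: mult_2)
    then show ?thesis by simp
  qed
  have hom: "\<And>a b m. a \<in> {1..2*p} \<Longrightarrow> b \<in> {1..2*p} \<Longrightarrow> m \<in> {1..2*p} \<Longrightarrow> psi a b m \<noteq> 0 \<Longrightarrow>
     gdeg m = gdeg a + gdeg b + 1" using H by (auto simp: homogeneous_def)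
  show ?thesis
  proof (intro ext)
    fix a b m
    show "psi a b m = Fc p (\<lambda>b. psi 2 b 1) a b m"
    proof (cases "m = 1 \<and> a = 2 \<and> 3 \<le> b \<and> b \<le> 2*p")
      case True then show ?thesis by (simp add: Fc_def)
    next
      case F1: False
      show ?thesis
      proof (cases "m = 1 \<and> b = 2 \<and> 3 \<le> a \<and> a \<le> 2*p")
        case True
        then have "Fc p (\<lambda>b. psi 2 b 1) a b m = - psi 2 a 1" by (simp add: Fc_def)
        then show ?thesis using True anti[of a 2 1] by simp
      next
        case False
        have z: "Fc p (\<lambda>b. psi 2 b 1) a b m = 0" by (simp only: Fc_def if_not_P[OF F1] if_not_P[OF False])
        have "psi a b m = 0"
        proof (rule ccontr)
          assume nz: "psi a b m \<noteq> 0"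
          then have r: "a \<in> {1..2*p}" "b \<in> {1..2*p}" "m \<in> {1..2*p}" using out by blast+
          have "a \<noteq> b" using nz diag by auto
          then have "(m = 1 \<and> a = 2 \<and> b \<noteq> 1 \<and> b \<noteq> 2) \<or> (m = 1 \<and> b = 2 \<and> a \<noteq> 1 \<and> a \<noteq> 2)"
            using gdeg_lemma[OF hom[OF r nz]] by blast
          then show False using r F1 False by auto
        qed
        then show ?thesis using z by simp
      qed
    qed
  qed
qed

lemma Z2_eq: assumes "p \<ge> 1" shows "Z2 p phi 1 = range (Fc p)"
  using Fc_in[OF assms] Z2_sub by blast

theorem lemma6:
  fixes p :: nat and phi :: "nat \<Rightarrow> complex"
  assumes "p \<ge> 2" and "\<not> in_Omega p phi"
  shows "vector_space.dim cscale (Z2 p phi 1) = 2 * (p - 1)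
       \<and> psi12 ` {3..2*p} \<subseteq> Z2 p phi 1
       \<and> inj_on psi12 {3..2*p}
       \<and> \<not> module.dependent cscale (psi12 ` {3..2*p})
       \<and> module.span cscale (psi12 ` {3..2*p}) = Z2 p phi 1"
proof -
  interpret V: vector_space cscale by (rule vector_space_cscale)
  have p1: "p \<ge> 1" using assms by simp
  have SP: "V.span (psi12 ` {3..2*p}) = Z2 p phi 1" using span_eq Z2_eq[OF p1] by simp
  have sub: "psi12 ` {3..2*p} \<subseteq> Z2 p phi 1" using SP V.span_superset by blast
  have ind: "\<not> V.dependent (psi12 ` {3..2*p})"
  proof
    assume "V.dependent (psi12 ` {3..2*p})"
    then obtain u v where v: "v \<in> psi12 ` {3..2*p}" "u v \<noteq> 0"
      and s: "(\<Sum>v\<in>psi12 ` {3..2*p}. cscale (u v) v) = 0"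
      using V.dependent_finite[of "psi12 ` {3..2*p}"] by auto
    obtain j where j: "j \<in> {3..2*p}" "v = psi12 j" using v by auto
    have "(\<Sum>k\<in>{3..2*p}. cscale (u (psi12 k)) (psi12 k)) = 0"
      using s by (simp add: sum.reindex[OF inj_psi12])
    then have "(\<Sum>k\<in>{3..2*p}. cscale (u (psi12 k)) (psi12 k)) 2 j 1 = 0" by simp
    then have "Fc p (\<lambda>k. u (psi12 k)) 2 j 1 = 0"
      by (simp add: sum_apply3 cscale_def sum_psi12)
    then show False using j v by (simp add: Fc_def)
  qed
  have "V.dim (Z2 p phi 1) = card (psi12 ` {3..2*p})"
    using V.dim_span_eq_card_independent[OF ind] SP by simp
  also have "\<dots> = 2 * (p - 1)" using card_image[OF inj_psi12, of p] assms by simp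
  finally show ?thesis using SP sub ind inj_psi12 by blast
qed

end
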